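(* Under the Fuzzy RD Assumption below, $$\int\Delta(z)\,f_{Z(0)\mid X,co}(z\mid c^-)\,dz=\frac{\int\big(\mathbb E(Y\mid X=c^+,Z=z)-\mathbb E(Y\mid X=c^-,Z=z)\big)f_{Z(0)\mid X}(z\mid c^-)\,dz}{\int\big(\mathbb E(T\mid X=c^+,Z=z)-\mathbb E(T\mid X=c^-,Z=z)\big)f_{Z(0)\mid X}(z\mid c^-)\,dz},$$ and, with $g(z)=f_{Z(0)\mid X}(z\mid c^-)+f_{Z(1)\mid X}(z\mid c^+)$, $$\frac{\int\Delta(z)\,p_{co}(z)\,g(z)\,dz}{\int p_{co}(z)\,g(z)\,dz}=\frac{\int\big(\mathbb E(Y\mid X=c^+,Z=z)-\mathbb E(Y\mid X=c^-,Z=z)\big)g(z)\,dz}{\int\big(\mathbb E(T\mid X=c^+,Z=z)-\mathbb E(T\mid X=c^-,Z=z)\big)g(z)\,dz},$$ i.e. the left side is the average of $\Delta$ over compliers at the cutoff whose covariates follow the equal mixture of the left- and right-limit covariate distributions. (Denominators are assumed nonzero.)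
   Context: Fuzzy RD setting: running variable $X$, cutoff $c$, binary treatment $T$, potential outcomes $Y(0),Y(1)$ with $Y=TY(1)+(1-T)Y(0)$, potential covariates with $Z=\mathbf 1(X>c)Z(1)+\mathbf 1(X\le c)Z(0)$. Each individual has a type $\tau\in\{co,at,nt\}$: compliers ($T=\mathbf 1(X>c)$), always-takers ($T=1$), never-takers ($T=0$). Limits $c^\pm$ denote right/left limits in $x$ of the corresponding conditional quantities (assumed to exist). Fuzzy RD Assumption: (1) Independence: for each type $\tau$ and each $z$, $\mathbb P(\tau\mid X=c^+,Z(1)=z)=\mathbb P(\tau\mid X=c^-,Z(0)=z)=:p_\tau(z)$. (2) Monotonicity: $p_{co}(z)+p_{at}(z)+p_{nt}(z)=1$ (no other types). (3) Exclusion: $\mathbb E(Y(1)\mid X=c^+,Z(1)=z,at)=\mathbb E(Y(1)\mid X=c^-,Z(0)=z,at)$ and $\mathbb E(Y(0)\mid X=c^+,Z(1)=z,nt)=\mathbb E(Y(0)\mid X=c^-,Z(0)=z,nt)$. Definitions: $\Delta(z)=\mathbb E(Y(1)\mid X=c^+,Z(1)=z,co)-\mathbb E(Y(0)\mid X=c^-,Z(0)=z,co)$; $f_{Z(0)\mid X}(z\mid c^-)$, $f_{Z(1)\mid X}(z\mid c^+)$ are the limiting conditional densities of $Z(0)$, $Z(1)$ given $X$, and $f_{Z(0)\mid X,co}(z\mid c^-)$ is the limiting conditional density of $Z(0)$ given $X\uparrow c$ and type $co$. *)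

theory Defs
  imports "HOL-Probability.Probability"
begin

text \<open>Compliance types. Monotonicity (no defiers or other types) is built in:
  these are the only three types.\<close>
datatype ctype = Co | At | Nt

text \<open>An individual's unobserved data at a given (X, Z) cell: (type, Y(0), Y(1)).\<close>
type_synonym obs = "ctype \<times> real \<times> real"

definition outcome_space :: "obs measure" where
  "outcome_space = count_space UNIV \<Otimes>\<^sub>M (borel \<Otimes>\<^sub>M borel)"

definition otype :: "obs \<Rightarrow> ctype" where "otype \<omega> = fst \<omega>"
definition pot0 :: "obs \<Rightarrow> real" where "pot0 \<omega> = fst (snd \<omega>)"
definition pot1 :: "obs \<Rightarrow> real" where "pot1 \<omega> = snd (snd \<omega>)"

text \<open>Treatment status of a type on the right (rside = True, X > c) or left
  (rside = False, X \<le> c) of the cutoff.\<close>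
definition treat :: "bool \<Rightarrow> ctype \<Rightarrow> bool" where
  "treat rside \<tau> = (case \<tau> of Co \<Rightarrow> rside | At \<Rightarrow> True | Nt \<Rightarrow> False)"

definition obsY :: "bool \<Rightarrow> obs \<Rightarrow> real" where
  "obsY rside \<omega> = (if treat rside (otype \<omega>) then pot1 \<omega> else pot0 \<omega>)"

definition ptype :: "obs measure \<Rightarrow> ctype \<Rightarrow> real" where
  "ptype M \<tau> = measure M ({\<tau>} \<times> UNIV)"

definition condE0 :: "obs measure \<Rightarrow> ctype \<Rightarrow> real" where
  "condE0 M \<tau> = (\<integral>\<omega>. indicator ({\<tau>} \<times> UNIV) \<omega> * pot0 \<omega> \<partial>M) / ptype M \<tau>"

definition condE1 :: "obs measure \<Rightarrow> ctype \<Rightarrow> real" where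
  "condE1 M \<tau> = (\<integral>\<omega>. indicator ({\<tau>} \<times> UNIV) \<omega> * pot1 \<omega> \<partial>M) / ptype M \<tau>"

definition condEY :: "bool \<Rightarrow> obs measure \<Rightarrow> real" where
  "condEY rside M = (\<integral>\<omega>. obsY rside \<omega> \<partial>M)"

definition condET :: "bool \<Rightarrow> obs measure \<Rightarrow> real" where
  "condET rside M = (\<integral>\<omega>. of_bool (treat rside (otype \<omega>)) \<partial>M)"

text \<open>Kp z: limiting law of (type, Y(0), Y(1)) given X = c^+, Z(1) = z;
  Km z: limiting law given X = c^-, Z(0) = z.\<close>

definition Delta :: "(real \<Rightarrow> obs measure) \<Rightarrow> (real \<Rightarrow> obs measure) \<Rightarrow> real \<Rightarrow> real" where
  "Delta Kp Km z = condE1 (Kp z) Co - condE0 (Km z) Co"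

text \<open>Conditional density of Z(0) given X = c^- and type co (Bayes' rule).\<close>
definition f_co :: "(real \<Rightarrow> obs measure) \<Rightarrow> (real \<Rightarrow> real) \<Rightarrow> real \<Rightarrow> real" where
  "f_co Km f0 z = ptype (Km z) Co * f0 z / (\<integral>u. ptype (Km u) Co * f0 u \<partial>lborel)"

definition is_density :: "(real \<Rightarrow> real) \<Rightarrow> bool" where
  "is_density f \<longleftrightarrow> f \<in> borel_measurable borel \<and> (\<forall>z. 0 \<le> f z)
     \<and> integrable lborel f \<and> (\<integral>z. f z \<partial>lborel) = 1"

end

theory Submission
  imports Defs
begin


lemma typeset_sets: "{t} \<times> UNIV \<in> sets outcome_space"
  unfolding outcome_space_def
  by (rule pair_measureI) (auto simp: space_pair_measure intro: sets.top[of "borel \<Otimes>\<^sub>M borel", simplified space_pair_measure, simplified])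

lemma space_os: "sets M = sets outcome_space \<Longrightarrow> space M = UNIV"
  using sets_eq_imp_space_eq[of M outcome_space]
  by (simp add: outcome_space_def space_pair_measure)

lemma int_ind:
  fixes g :: "obs \<Rightarrow> real"
  assumes "prob_space M" "sets M = sets outcome_space" "integrable M g"
  shows "integrable M (\<lambda>w. indicator ({t} \<times> UNIV) w * g w)"
  using integrable_mult_indicator[of "{t} \<times> UNIV" M g] assms typeset_sets
  by (simp add: mult.commute)

lemma null_ind:
  fixes g :: "obs \<Rightarrow> real"
  assumes "prob_space M" "sets M = sets outcome_space" "ptype M t = 0" "integrable M g"
  shows "(\<integral>w. indicator ({t} \<times> UNIV) w * g w \<partial>M) = 0"
proof -
  interpret prob_space M by fact
  have S: "{t} \<times> UNIV \<in> sets M" using assms(2) typeset_sets by simp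
  have "emeasure M ({t} \<times> UNIV) = 0"
    using assms(3) S by (simp add: ptype_def emeasure_eq_measure)
  then have "{t} \<times> UNIV \<in> null_sets M" using S by auto
  then have "AE w in M. w \<notin> {t} \<times> UNIV" by (rule AE_not_in)
  then have "AE w in M. indicator ({t} \<times> UNIV) w * g w = 0" by eventually_elim (simp add: indicator_def)
  then have "(\<integral>w. indicator ({t} \<times> UNIV) w * g w \<partial>M) = (\<integral>w. 0 \<partial>M)"
    by (rule integral_cong_AE[rotated 2])
      (use int_ind[OF assms(1,2,4), of t] in auto)
  then show ?thesis by simp
qed

lemma condEY_dec:
  assumes "prob_space M" "sets M = sets outcome_space" "integrable M pot0" "integrable M pot1"
  shows "condEY r M = (\<integral>w. indicator ({Co} \<times> UNIV) w * (if r then pot1 w else pot0 w) \<partial>M)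
     + (\<integral>w. indicator ({At} \<times> UNIV) w * pot1 w \<partial>M) + (\<integral>w. indicator ({Nt} \<times> UNIV) w * pot0 w \<partial>M)"
proof -
  have i: "integrable M (\<lambda>w. indicator ({Co} \<times> UNIV) w * (if r then pot1 w else pot0 w))"
    using int_ind[OF assms(1,2), of "\<lambda>w. if r then pot1 w else pot0 w"] assms(3,4)
    by (cases r) auto
  have pw: "\<And>w. obsY r w = indicator ({Co} \<times> UNIV) w * (if r then pot1 w else pot0 w)
     + indicator ({At} \<times> UNIV) w * pot1 w + indicator ({Nt} \<times> UNIV) w * pot0 w"
    by (case_tac "fst w") (auto simp: obsY_def treat_def otype_def indicator_def)
  have iA: "integrable M (\<lambda>w. indicator ({At} \<times> UNIV) w * pot1 w)"
    and iN: "integrable M (\<lambda>w. indicator ({Nt} \<times> UNIV) w * pot0 w)"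
    using int_ind assms by auto
  show ?thesis unfolding condEY_def pw
    using Bochner_Integration.integral_add[OF Bochner_Integration.integrable_add[OF i iA] iN] Bochner_Integration.integral_add[OF i iA] by simp
qed

lemma condET_T:
  assumes "prob_space M" "sets M = sets outcome_space"
  shows "condET True M = ptype M Co + ptype M At"
proof -
  interpret prob_space M by fact
  have S: "\<And>t. {t} \<times> UNIV \<in> sets M" using assms(2) typeset_sets by simp
  have iI: "integrable M (indicator ({t} \<times> UNIV) :: _ \<Rightarrow> real)" for t
    by (rule integrable_real_indicator[OF S]) (simp add: less_top[symmetric])
  have pw: "\<And>w. of_bool (treat True (otype w)) = indicator ({Co} \<times> UNIV) w + (indicator ({At} \<times> UNIV) w :: real)"
    by (case_tac "fst w") (auto simp: treat_def otype_def indicator_def)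
  show ?thesis unfolding condET_def pw
    using S Bochner_Integration.integral_add[OF iI[of Co] iI[of At]]
    by (auto simp: ptype_def space_os[OF assms(2)])
qed

lemma condET_F:
  assumes "prob_space M" "sets M = sets outcome_space"
  shows "condET False M = ptype M At"
proof -
  have pw: "\<And>w. of_bool (treat False (otype w)) = (indicator ({At} \<times> UNIV) w :: real)"
    by (case_tac "fst w") (auto simp: treat_def otype_def indicator_def)
  show ?thesis unfolding condET_def pw
    by (auto simp: ptype_def space_os[OF assms(2)])
qed

theorem theorem4:
  fixes Kp Km :: "real \<Rightarrow> obs measure" and f0 f1 :: "real \<Rightarrow> real"
  assumes Kp_prob: "\<And>z. prob_space (Kp z)" and Kp_sets: "\<And>z. sets (Kp z) = sets outcome_space"
      and Km_prob: "\<And>z. prob_space (Km z)" and Km_sets: "\<And>z. sets (Km z) = sets outcome_space"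
      and Kp_int: "\<And>z. integrable (Kp z) pot0" "\<And>z. integrable (Kp z) pot1"
      and Km_int: "\<And>z. integrable (Km z) pot0" "\<And>z. integrable (Km z) pot1"
      and dens: "is_density f0" "is_density f1"
      and independence: "\<And>z \<tau>. ptype (Kp z) \<tau> = ptype (Km z) \<tau>"
      and excl_at: "\<And>z. condE1 (Kp z) At = condE1 (Km z) At"
      and excl_nt: "\<And>z. condE0 (Kp z) Nt = condE0 (Km z) Nt"
      and den1: "(\<integral>z. (condET True (Kp z) - condET False (Km z)) * f0 z \<partial>lborel) \<noteq> 0"
      and den2: "(\<integral>z. (condET True (Kp z) - condET False (Km z)) * (f0 z + f1 z) \<partial>lborel) \<noteq> 0"
  shows "(\<integral>z. Delta Kp Km z * f_co Km f0 z \<partial>lborel)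
           = (\<integral>z. (condEY True (Kp z) - condEY False (Km z)) * f0 z \<partial>lborel)
             / (\<integral>z. (condET True (Kp z) - condET False (Km z)) * f0 z \<partial>lborel)
       \<and> (\<integral>z. Delta Kp Km z * ptype (Kp z) Co * (f0 z + f1 z) \<partial>lborel)
           / (\<integral>z. ptype (Kp z) Co * (f0 z + f1 z) \<partial>lborel)
           = (\<integral>z. (condEY True (Kp z) - condEY False (Km z)) * (f0 z + f1 z) \<partial>lborel)
             / (\<integral>z. (condET True (Kp z) - condET False (Km z)) * (f0 z + f1 z) \<partial>lborel)"
  proof -
  define p where "p z = ptype (Kp z) Co" for z
  have pm: "\<And>z. ptype (Km z) Co = p z" using independence p_def by simp
  have eqI: "\<And>a b q. a / q = b / q \<Longrightarrow> (q = 0 \<Longrightarrow> a = 0 \<and> b = 0) \<Longrightarrow> a = (b::real)"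
    by (metis divide_cancel_right)
  have numY: "condEY True (Kp z) - condEY False (Km z) = Delta Kp Km z * p z" for z
  proof -
    note dp = condEY_dec[OF Kp_prob Kp_sets Kp_int, of True z]
    note dm = condEY_dec[OF Km_prob Km_sets Km_int, of False z]
    have at: "(\<integral>w. indicator ({At} \<times> UNIV) w * pot1 w \<partial>Kp z) = (\<integral>w. indicator ({At} \<times> UNIV) w * pot1 w \<partial>Km z)"
    proof (cases "ptype (Kp z) At = 0")
      case True
      then show ?thesis using null_ind[OF Kp_prob Kp_sets True Kp_int(2)]
        null_ind[OF Km_prob Km_sets _ Km_int(2), where t=At] independence[of z At] by simp
    next
      case False
      then show ?thesis using excl_at[of z] independence[of z At] by (simp add: condE1_def)
    qed
    have nt: "(\<integral>w. indicator ({Nt} \<times> UNIV) w * pot0 w \<partial>Kp z) = (\<integral>w. indicator ({Nt} \<times> UNIV) w * pot0 w \<partial>Km z)"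
    proof (cases "ptype (Kp z) Nt = 0")
      case True
      then show ?thesis using null_ind[OF Kp_prob Kp_sets True Kp_int(1)]
        null_ind[OF Km_prob Km_sets _ Km_int(1), where t=Nt] independence[of z Nt] by simp
    next
      case False
      then show ?thesis using excl_nt[of z] independence[of z Nt] by (simp add: condE0_def)
    qed
    have co: "(\<integral>w. indicator ({Co} \<times> UNIV) w * pot1 w \<partial>Kp z) - (\<integral>w. indicator ({Co} \<times> UNIV) w * pot0 w \<partial>Km z)
        = Delta Kp Km z * p z"
    proof (cases "p z = 0")
      case True
      then show ?thesis using null_ind[OF Kp_prob Kp_sets _ Kp_int(2), where t=Co] null_ind[OF Km_prob Km_sets _ Km_int(1), where t=Co] pm p_def by (simp add: Delta_def)
    next
      case False
      then show ?thesis using pm unfolding Delta_def condE1_def condE0_def p_def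
        by (simp add: field_simps)
    qed
    show ?thesis using dp dm at nt co by simp
  qed
  have numT: "condET True (Kp z) - condET False (Km z) = p z" for z
    using condET_T[OF Kp_prob Kp_sets] condET_F[OF Km_prob Km_sets] independence p_def by simp
  have fco: "f_co Km f0 z = p z * f0 z / (\<integral>u. p u * f0 u \<partial>lborel)" for z
    unfolding f_co_def pm ..
  show ?thesis
  proof (unfold p_def[symmetric] numY numT fco, rule conjI[OF _ refl])
    have "\<And>z. Delta Kp Km z * (p z * f0 z / (\<integral>u. p u * f0 u \<partial>lborel))
       = Delta Kp Km z * p z * f0 z / (\<integral>u. p u * f0 u \<partial>lborel)" by simp
    then show "(\<integral>z. Delta Kp Km z * (p z * f0 z / (\<integral>u. p u * f0 u \<partial>lborel)) \<partial>lborel)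
       = (\<integral>z. Delta Kp Km z * p z * f0 z \<partial>lborel) / (\<integral>z. p z * f0 z \<partial>lborel)"
      by (simp only: integral_divide_zero)
  qed
qed

end
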